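(* There is a polynomial $f$ such that every satisfiable $\mathrm{LTL_{PSL}}$ formula $\varphi$ is satisfied in an $\mathrm{SLTL}$ model $M=(\Pi,\lambda)$ (i.e. $M,\sigma,0\models\varphi$ for some $\sigma\in\Pi$) with $|\Pi|\le f(|\varphi|)$, where $|\varphi|$ is the size of $\varphi$.
   Context: Fix countably infinite sets $\mathcal{P}$ of propositional variables and $\mathcal{S}$ of standpoint symbols containing a universal symbol $*$. SLTL formulae: $\varphi ::= p \mid s \preceq s' \mid \neg\varphi \mid \varphi\wedge\varphi \mid \Diamond_s\varphi \mid \Box_s\varphi \mid X\varphi \mid \varphi\,U\,\varphi$. A model is $M=(\Pi,\lambda)$ with $\Pi\neq\emptyset$ a set of traces $\sigma:\mathbb{N}\to 2^{\mathcal{P}}$ and $\lambda:\mathcal{S}\to 2^{\Pi}\setminus\{\emptyset\}$ with $\lambda( * )=\Pi$. Semantics: $M,\sigma,i\models p$ iff $p\in\sigma(i)$; $M,\sigma,i\models s\preceq s'$ iff $\lambda(s)\subseteq\lambda(s')$; Boolean clauses as usual; $\Diamond_s\psi$ (resp. $\Box_s\psi$) holds at $\sigma,i$ iff $\psi$ holds at $\sigma',i$ for some (resp. all) $\sigma'\in\lambda(s)$; $X\psi$ holds at $\sigma,i$ iff $\psi$ holds at $\sigma,i+1$; $\psi U\chi$ holds at $\sigma,i$ iff $\chi$ holds at $\sigma,i'$ for some $i'\ge i$ and $\psi$ holds at $\sigma,i''$ for all $i\le i''<i'$. $\varphi$ is satisfiable iff $M,\sigma,0\models\varphi$ for some $M=(\Pi,\lambda)$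 and $\sigma\in\Pi$. $\mathrm{LTL_{PSL}}$ is the fragment of SLTL consisting of formulae in which no temporal connective ($X$ or $U$) occurs in the scope of a standpoint modality $\Diamond_s$ or $\Box_s$. *)

theory Defs
  imports Main "HOL-Computational_Algebra.Polynomial"
begin

datatype stp = Star | Sym nat

datatype sltl =
    Prop nat
  | Sharper stp stp
  | Neg sltl
  | Conj sltl sltl
  | Dia stp sltl
  | Box stp sltl
  | Next sltl
  | Until sltl sltl

type_synonym trace = "nat \<Rightarrow> nat set"

definition sltl_model :: "trace set \<Rightarrow> (stp \<Rightarrow> trace set) \<Rightarrow> bool" where
  "sltl_model \<Pi> lam \<longleftrightarrow> \<Pi> \<noteq> {} \<and> (\<forall>s. lam s \<subseteq> \<Pi> \<and> lam s \<noteq> {}) \<and> lam Star = \<Pi>"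

fun sat :: "trace set \<Rightarrow> (stp \<Rightarrow> trace set) \<Rightarrow> trace \<Rightarrow> nat \<Rightarrow> sltl \<Rightarrow> bool" where
  "sat \<Pi> lam \<sigma> i (Prop p) = (p \<in> \<sigma> i)"
| "sat \<Pi> lam \<sigma> i (Sharper s s') = (lam s \<subseteq> lam s')"
| "sat \<Pi> lam \<sigma> i (Neg \<phi>) = (\<not> sat \<Pi> lam \<sigma> i \<phi>)"
| "sat \<Pi> lam \<sigma> i (Conj \<phi> \<psi>) = (sat \<Pi> lam \<sigma> i \<phi> \<and> sat \<Pi> lam \<sigma> i \<psi>)"
| "sat \<Pi> lam \<sigma> i (Dia s \<phi>) = (\<exists>\<sigma>'\<in>lam s. sat \<Pi> lam \<sigma>' i \<phi>)"
| "sat \<Pi> lam \<sigma> i (Box s \<phi>) = (\<forall>\<sigma>'\<in>lam s. sat \<Pi> lam \<sigma>' i \<phi>)"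
| "sat \<Pi> lam \<sigma> i (Next \<phi>) = sat \<Pi> lam \<sigma> (Suc i) \<phi>"
| "sat \<Pi> lam \<sigma> i (Until \<phi> \<psi>) =
     (\<exists>i'\<ge>i. sat \<Pi> lam \<sigma> i' \<psi> \<and> (\<forall>i''. i \<le> i'' \<and> i'' < i' \<longrightarrow> sat \<Pi> lam \<sigma> i'' \<phi>))"

definition satisfiable :: "sltl \<Rightarrow> bool" where
  "satisfiable \<phi> \<longleftrightarrow> (\<exists>\<Pi> lam \<sigma>. sltl_model \<Pi> lam \<and> \<sigma> \<in> \<Pi> \<and> sat \<Pi> lam \<sigma> 0 \<phi>)"

fun fsize :: "sltl \<Rightarrow> nat" where
  "fsize (Prop p) = 1"
| "fsize (Sharper s s') = 1"
| "fsize (Neg \<phi>) = Suc (fsize \<phi>)"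
| "fsize (Conj \<phi> \<psi>) = Suc (fsize \<phi> + fsize \<psi>)"
| "fsize (Dia s \<phi>) = Suc (fsize \<phi>)"
| "fsize (Box s \<phi>) = Suc (fsize \<phi>)"
| "fsize (Next \<phi>) = Suc (fsize \<phi>)"
| "fsize (Until \<phi> \<psi>) = Suc (fsize \<phi> + fsize \<psi>)"

fun temporal_free :: "sltl \<Rightarrow> bool" where
  "temporal_free (Prop p) = True"
| "temporal_free (Sharper s s') = True"
| "temporal_free (Neg \<phi>) = temporal_free \<phi>"
| "temporal_free (Conj \<phi> \<psi>) = (temporal_free \<phi> \<and> temporal_free \<psi>)"
| "temporal_free (Dia s \<phi>) = temporal_free \<phi>"
| "temporal_free (Box s \<phi>) = temporal_free \<phi>"
| "temporal_free (Next \<phi>) = False"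
| "temporal_free (Until \<phi> \<psi>) = False"

fun ltl_psl :: "sltl \<Rightarrow> bool" where
  "ltl_psl (Prop p) = True"
| "ltl_psl (Sharper s s') = True"
| "ltl_psl (Neg \<phi>) = ltl_psl \<phi>"
| "ltl_psl (Conj \<phi> \<psi>) = (ltl_psl \<phi> \<and> ltl_psl \<psi>)"
| "ltl_psl (Dia s \<phi>) = temporal_free \<phi>"
| "ltl_psl (Box s \<phi>) = temporal_free \<phi>"
| "ltl_psl (Next \<phi>) = ltl_psl \<phi>"
| "ltl_psl (Until \<phi> \<psi>) = (ltl_psl \<phi> \<and> ltl_psl \<psi>)"

end

theory Submission
  imports Defs
begin

fun subs :: "sltl \<Rightarrow> sltl set" where
  "subs (Prop p) = {Prop p}"
| "subs (Sharper s s') = {Sharper s s'}"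
| "subs (Neg a) = insert (Neg a) (subs a)"
| "subs (Conj a b) = insert (Conj a b) (subs a \<union> subs b)"
| "subs (Dia s a) = insert (Dia s a) (subs a)"
| "subs (Box s a) = insert (Box s a) (subs a)"
| "subs (Next a) = insert (Next a) (subs a)"
| "subs (Until a b) = insert (Until a b) (subs a \<union> subs b)"

fun stps :: "sltl \<Rightarrow> stp set" where
  "stps (Prop p) = {}"
| "stps (Sharper s s') = {s, s'}"
| "stps (Neg a) = stps a"
| "stps (Conj a b) = stps a \<union> stps b"
| "stps (Dia s a) = insert s (stps a)"
| "stps (Box s a) = insert s (stps a)"
| "stps (Next a) = stps a"
| "stps (Until a b) = stps a \<union> stps b"

fun pb :: "sltl \<Rightarrow> nat" where
  "pb (Prop p) = Suc p"
| "pb (Sharper s s') = 0"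
| "pb (Neg a) = pb a"
| "pb (Conj a b) = max (pb a) (pb b)"
| "pb (Dia s a) = pb a"
| "pb (Box s a) = pb a"
| "pb (Next a) = pb a"
| "pb (Until a b) = max (pb a) (pb b)"

lemma subs_self: "a \<in> subs a"
  by (cases a) auto

lemma subs_trans: "x \<in> subs y \<Longrightarrow> subs x \<subseteq> subs y"
  by (induction y) auto

lemma subs_finite: "finite (subs a)"
  by (induction a) auto

lemma stps_finite: "finite (stps a)"
  by (induction a) auto

lemma subs_card: "card (subs a) \<le> fsize a"
proof (induction a)
  case (Conj a b)
  have "card (subs (Conj a b)) \<le> Suc (card (subs a \<union> subs b))"
    by (simp add: card_insert_le_m1 card_insert_if subs_finite)
  also have "\<dots> \<le> Suc (card (subs a) + card (subs b))" by (simp add: card_Un_le)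
  finally show ?case using Conj by simp
next
  case (Until a b)
  have "card (subs (Until a b)) \<le> Suc (card (subs a \<union> subs b))"
    by (simp add: card_insert_if subs_finite)
  also have "\<dots> \<le> Suc (card (subs a) + card (subs b))" by (simp add: card_Un_le)
  finally show ?case using Until by simp
qed (auto simp: card_insert_if subs_finite)

lemma stps_card: "card (stps a) \<le> 2 * fsize a"
proof (induction a)
  case (Sharper s s')
  then show ?case by (simp add: card_insert_if)
next
  case (Conj a b)
  then show ?case using card_Un_le[of "stps a" "stps b"] by simp
next
  case (Until a b)
  then show ?case using card_Un_le[of "stps a" "stps b"] by simp
qed (auto simp: card_insert_if stps_finite)

lemma sub_stps: "x \<in> subs y \<Longrightarrow> stps x \<subseteq> stps y"
  by (induction y) auto

lemma sub_pb: "x \<in> subs y \<Longrightarrow> pb x \<le> pb y"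
  by (induction y) auto

locale constr =
  fixes \<phi> :: sltl and \<Pi> :: "trace set" and lam :: "stp \<Rightarrow> trace set" and \<sigma> :: trace
  assumes model: "sltl_model \<Pi> lam" and sig: "\<sigma> \<in> \<Pi>"
begin

definition "S = insert Star (stps \<phi>)"
definition "W = S \<times> subs \<phi> \<times> (UNIV :: bool set)"
definition "n = card W"
definition "h = (SOME h. bij_betw h {0..<n} W)"
definition "N = pb \<phi>"
definition "up s = {s'\<in>S. lam s \<subseteq> lam s'}"
definition "ty k = (if k < n then up (fst (h k)) else up Star)"
definition "src k i = (if k < n then
    (case h k of (s, \<chi>, b) \<Rightarrow>
      (if \<exists>\<pi>\<in>lam s. sat \<Pi> lam \<pi> i \<chi> = b then SOME \<pi>. \<pi> \<in> lam s \<and> sat \<Pi> lam \<pi> i \<chi> = b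
       else SOME \<pi>. \<pi> \<in> lam s))
   else \<sigma>)"
definition "tau k = (\<lambda>i. src k i i \<inter> {..<N} \<union> {N + k})"
definition "P' = tau ` {..n}"
definition "lam' s = (if s \<in> S then tau ` {k\<in>{..n}. s \<in> ty k} else P')"

lemma finW: "finite W"
  unfolding W_def S_def by (simp add: subs_finite stps_finite)

lemma hbij: "bij_betw h {0..<n} W"
proof -
  have "\<exists>h. bij_betw h {0..<n} W" unfolding n_def using finW ex_bij_betw_nat_finite by blast
  then show ?thesis unfolding h_def by (rule someI_ex)
qed

lemma hidx: assumes "w \<in> W" obtains k where "k < n" "h k = w"
  using hbij assms unfolding bij_betw_def by force

lemma lam_ne: "lam s \<noteq> {}" and lam_sub: "lam s \<subseteq> \<Pi>" and lam_star: "lam Star = \<Pi>"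
  using model unfolding sltl_model_def by auto

lemma srcA: assumes "k \<le> n" "s \<in> ty k" shows "src k i \<in> lam s"
proof (cases "k < n")
  case True
  obtain t \<chi> b where hk: "h k = (t, \<chi>, b)" by (cases "h k") auto
  have "src k i \<in> lam t"
  proof (cases "\<exists>\<pi>\<in>lam t. sat \<Pi> lam \<pi> i \<chi> = b")
    case True
    then have "\<exists>\<pi>. \<pi> \<in> lam t \<and> sat \<Pi> lam \<pi> i \<chi> = b" by blast
    from someI_ex[OF this] show ?thesis using True \<open>k < n\<close> hk unfolding src_def by simp
  next
    case False
    have "\<exists>\<pi>. \<pi> \<in> lam t" using lam_ne by blast
    from someI_ex[OF this] show ?thesis using False \<open>k < n\<close> hk unfolding src_def by simp
  qed
  moreover have "lam t \<subseteq> lam s" using assms True hk unfolding ty_def up_def by simp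
  ultimately show ?thesis by blast
next
  case False
  then have "lam Star \<subseteq> lam s" using assms unfolding ty_def up_def by simp
  then show ?thesis using False sig lam_star unfolding src_def by auto
qed

lemma srcW: assumes "k < n" "h k = (s, \<chi>, b)" "\<pi> \<in> lam s" "sat \<Pi> lam \<pi> i \<chi> = b"
  shows "sat \<Pi> lam (src k i) i \<chi> = b"
proof -
  have "\<exists>\<pi>. \<pi> \<in> lam s \<and> sat \<Pi> lam \<pi> i \<chi> = b" using assms by blast
  from someI_ex[OF this] show ?thesis using assms unfolding src_def by auto
qed

lemma tau_inj: assumes "tau k = tau k'" shows "k = k'"
proof -
  have "N + k \<in> tau k' 0" using assms unfolding tau_def by (metis UnI2 singletonI)
  then show ?thesis unfolding tau_def by auto
qed

lemma tau_state: "tau k i \<inter> {..<N} = src k i i \<inter> {..<N}"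
  unfolding tau_def by auto

lemma ty_up: "k \<le> n \<Longrightarrow> \<exists>t. ty k = up t"
  unfolding ty_def by auto

lemma sharper: assumes "s \<in> S" "s' \<in> S" shows "lam' s \<subseteq> lam' s' \<longleftrightarrow> lam s \<subseteq> lam s'"
proof
  assume L: "lam' s \<subseteq> lam' s'"
  show "lam s \<subseteq> lam s'"
  proof (rule ccontr)
    assume nsub: "\<not> lam s \<subseteq> lam s'"
    have "(s, \<phi>, True) \<in> W" using assms unfolding W_def by (simp add: subs_self)
    then obtain k where k: "k < n" "h k = (s, \<phi>, True)" by (rule hidx)
    then have tyk: "ty k = up s" unfolding ty_def by simp
    then have "tau k \<in> lam' s" using assms k unfolding lam'_def up_def by auto
    with L have "tau k \<in> lam' s'" by blast
    then obtain k' where "k' \<le> n" "s' \<in> ty k'" "tau k = tau k'"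
      using assms unfolding lam'_def by auto
    then have "s' \<in> ty k" using tau_inj by metis
    then show False using tyk nsub unfolding up_def by simp
  qed
next
  assume R: "lam s \<subseteq> lam s'"
  show "lam' s \<subseteq> lam' s'"
  proof
    fix x assume "x \<in> lam' s"
    then obtain k where k: "k \<le> n" "s \<in> ty k" "x = tau k" using assms unfolding lam'_def by auto
    obtain t where "ty k = up t" using ty_up k by blast
    then have "s' \<in> ty k" using k R assms unfolding up_def by auto
    then show "x \<in> lam' s'" using k assms unfolding lam'_def by auto
  qed
qed

lemma tf: "\<chi> \<in> subs \<phi> \<Longrightarrow> temporal_free \<chi> \<Longrightarrow>
   \<rho>' i \<inter> {..<N} = \<rho> i \<inter> {..<N} \<Longrightarrow> sat P' lam' \<rho>' i \<chi> = sat \<Pi> lam \<rho> i \<chi>"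
proof (induction \<chi> arbitrary: \<rho> \<rho>')
  case (Prop p)
  then have "p < N" using sub_pb[OF Prop(1)] unfolding N_def by simp
  then show ?case using Prop(3) by auto
next
  case (Sharper s s')
  then have "s \<in> S" "s' \<in> S" using sub_stps[OF Sharper(1)] unfolding S_def by auto
  then show ?case using sharper by simp
next
  case (Neg a)
  then show ?case using subs_trans[OF Neg(2)] subs_self[of a] by auto
next
  case (Conj a b)
  then show ?case using subs_trans[OF Conj(3)] subs_self[of a] subs_self[of b] by auto
next
  case (Dia s a)
  have sub: "a \<in> subs \<phi>" using subs_trans[OF Dia(2)] subs_self[of a] by auto
  have sS: "s \<in> S" using sub_stps[OF Dia(2)] unfolding S_def by auto
  have IH: "\<And>k. sat P' lam' (tau k) i a = sat \<Pi> lam (src k i) i a"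
    by (rule Dia(1)[OF sub _ tau_state]) (use Dia(3) in simp)
  show ?case
  proof
    assume "sat P' lam' \<rho>' i (Dia s a)"
    then obtain k where k: "k \<le> n" "s \<in> ty k" "sat P' lam' (tau k) i a"
      using sS unfolding lam'_def by auto
    then show "sat \<Pi> lam \<rho> i (Dia s a)" using IH srcA by auto
  next
    assume "sat \<Pi> lam \<rho> i (Dia s a)"
    then obtain \<pi> where \<pi>: "\<pi> \<in> lam s" "sat \<Pi> lam \<pi> i a" by auto
    have "(s, a, True) \<in> W" using sS sub unfolding W_def by simp
    then obtain k where k: "k < n" "h k = (s, a, True)" by (rule hidx)
    have "sat \<Pi> lam (src k i) i a" using srcW[OF k \<pi>(1)] \<pi>(2) by simp
    moreover have "s \<in> ty k" using k sS unfolding ty_def up_def by simp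
    moreover have "tau k \<in> lam' s" using sS k \<open>s \<in> ty k\<close> unfolding lam'_def by force
    ultimately show "sat P' lam' \<rho>' i (Dia s a)" using IH by auto
  qed
next
  case (Box s a)
  have sub: "a \<in> subs \<phi>" using subs_trans[OF Box(2)] subs_self[of a] by auto
  have sS: "s \<in> S" using sub_stps[OF Box(2)] unfolding S_def by auto
  have IH: "\<And>k. sat P' lam' (tau k) i a = sat \<Pi> lam (src k i) i a"
    by (rule Box(1)[OF sub _ tau_state]) (use Box(3) in simp)
  show ?case
  proof
    assume A: "sat P' lam' \<rho>' i (Box s a)"
    show "sat \<Pi> lam \<rho> i (Box s a)"
    proof (rule ccontr)
      assume "\<not> sat \<Pi> lam \<rho> i (Box s a)"
      then obtain \<pi> where \<pi>: "\<pi> \<in> lam s" "sat \<Pi> lam \<pi> i a = False" by auto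
      have "(s, a, False) \<in> W" using sS sub unfolding W_def by simp
      then obtain k where k: "k < n" "h k = (s, a, False)" by (rule hidx)
      have "\<not> sat \<Pi> lam (src k i) i a" using srcW[OF k \<pi>] by simp
      moreover have "s \<in> ty k" using k sS unfolding ty_def up_def by simp
      moreover have "tau k \<in> lam' s" using sS k \<open>s \<in> ty k\<close> unfolding lam'_def by force
      ultimately show False using A IH by auto
    qed
  next
    assume A: "sat \<Pi> lam \<rho> i (Box s a)"
    show "sat P' lam' \<rho>' i (Box s a)"
    proof (simp, intro ballI)
      fix x assume "x \<in> lam' s"
      then obtain k where k: "k \<le> n" "s \<in> ty k" "x = tau k"
        using sS unfolding lam'_def by auto
      then show "sat P' lam' x i a" using IH srcA A by auto
    qed
  qed
qed auto

lemma main: "\<chi> \<in> subs \<phi> \<Longrightarrow> ltl_psl \<chi> \<Longrightarrow> sat P' lam' (tau n) i \<chi> = sat \<Pi> lam \<sigma> i \<chi>"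
proof (induction \<chi> arbitrary: i)
  case (Prop p)
  then have "p < N" using sub_pb[OF Prop(1)] unfolding N_def by simp
  then show ?case unfolding tau_def src_def by auto
next
  case (Sharper s s')
  then have "s \<in> S" "s' \<in> S" using sub_stps[OF Sharper(1)] unfolding S_def by auto
  then show ?case using sharper by simp
next
  case (Neg a)
  then show ?case using subs_trans[OF Neg(2)] subs_self[of a] by auto
next
  case (Conj a b)
  then show ?case using subs_trans[OF Conj(3)] subs_self[of a] subs_self[of b] by auto
next
  case (Dia s a)
  then show ?case using tf[of "Dia s a" "tau n" i \<sigma>] tau_state[of n i] unfolding src_def by simp
next
  case (Box s a)
  then show ?case using tf[of "Box s a" "tau n" i \<sigma>] tau_state[of n i] unfolding src_def by simp
next
  case (Next a)
  then show ?case using subs_trans[OF Next(2)] subs_self[of a] by auto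
next
  case (Until a b)
  then have "a \<in> subs \<phi>" "b \<in> subs \<phi>" using subs_trans[OF Until(3)] subs_self[of a] subs_self[of b] by auto
  then show ?case using Until by simp
qed

lemma model': "sltl_model P' lam'"
  unfolding sltl_model_def
proof (intro conjI allI)
  show "P' \<noteq> {}" unfolding P'_def by simp
  show "lam' Star = P'"
  proof -
    have "{k\<in>{..n}. Star \<in> ty k} = {..n}"
      using ty_up lam_sub lam_star unfolding up_def S_def by fastforce
    then show ?thesis unfolding lam'_def P'_def S_def by simp
  qed
next
  fix s
  show "lam' s \<subseteq> P'" unfolding lam'_def P'_def by auto
  show "lam' s \<noteq> {}"
  proof (cases "s \<in> S")
    case True
    have "(s, \<phi>, True) \<in> W" using True unfolding W_def by (simp add: subs_self)
    then obtain k where k: "k < n" "h k = (s, \<phi>, True)" by (rule hidx)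
    then have "s \<in> ty k" using True unfolding ty_def up_def by simp
    then have "tau k \<in> lam' s" using k True unfolding lam'_def by force
    then show ?thesis by blast
  qed (simp add: lam'_def P'_def)
qed

lemma card': "card P' \<le> 2 * (2 * fsize \<phi> + 1) * fsize \<phi> + 1"
proof -
  have "card P' \<le> card {..n}" unfolding P'_def by (rule card_image_le) simp
  also have "\<dots> = n + 1" by simp
  also have "n = card S * card (subs \<phi>) * 2"
    unfolding n_def W_def by (simp add: card_cartesian_product)
  also have "card S \<le> 2 * fsize \<phi> + 1"
    unfolding S_def using stps_card[of \<phi>] card_insert_le_m1
    by (metis Suc_eq_plus1 card_insert_if le_SucI stps_finite Suc_le_mono)
  then have "card S * card (subs \<phi>) * 2 \<le> (2 * fsize \<phi> + 1) * fsize \<phi> * 2"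
    using subs_card[of \<phi>] by (intro mult_le_mono) auto
  finally show ?thesis by simp
qed

end

theorem corollary3:
  shows "\<exists>f :: nat poly. \<forall>\<phi>. ltl_psl \<phi> \<and> satisfiable \<phi> \<longrightarrow>
           (\<exists>\<Pi> lam \<sigma>. sltl_model \<Pi> lam \<and> finite \<Pi> \<and> card \<Pi> \<le> poly f (fsize \<phi>)
              \<and> \<sigma> \<in> \<Pi> \<and> sat \<Pi> lam \<sigma> 0 \<phi>)"
proof (rule exI[of _ "[:1, 2, 4:]"], intro allI impI)
  fix \<phi> assume A: "ltl_psl \<phi> \<and> satisfiable \<phi>"
  then obtain \<Pi> lam \<sigma> where m: "sltl_model \<Pi> lam" "\<sigma> \<in> \<Pi>" "sat \<Pi> lam \<sigma> 0 \<phi>"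
    unfolding satisfiable_def by blast
  interpret c: constr \<phi> \<Pi> lam \<sigma> using m by unfold_locales
  have "poly [:1, 2, 4:] (fsize \<phi>) = 2 * (2 * fsize \<phi> + 1) * fsize \<phi> + 1"
    by (simp add: algebra_simps)
  then show "\<exists>\<Pi> lam \<sigma>. sltl_model \<Pi> lam \<and> finite \<Pi> \<and> card \<Pi> \<le> poly [:1, 2, 4:] (fsize \<phi>)
              \<and> \<sigma> \<in> \<Pi> \<and> sat \<Pi> lam \<sigma> 0 \<phi>"
  proof -
    have "c.tau c.n \<in> c.P'" unfolding c.P'_def by simp
    moreover have "finite c.P'" unfolding c.P'_def by simp
    moreover have "sat c.P' c.lam' (c.tau c.n) 0 \<phi>"
      using c.main[of \<phi> 0] A m(3) subs_self[of \<phi>] by simp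
    ultimately show ?thesis using c.model' c.card' \<open>poly _ _ = _\<close>
      by (intro exI[of _ c.P'] exI[of _ c.lam'] exI[of _ "c.tau c.n"]) simp
  qed
qed

end
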